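(* Let $h$ be the state on $U_n^{nc}$ defined below. For all $r$ (even) and all $1\le i_1,j_1,\dots,i_r,j_r\le n$, $$h(u_{i_1j_1}u^*_{i_2j_2}u_{i_3j_3}u^*_{i_4j_4}\cdots u_{i_{r-1}j_{r-1}}u^*_{i_rj_r})=\tfrac1n\,\delta_{i_1i_2}\delta_{j_2j_3}\delta_{i_3i_4}\cdots\delta_{i_{r-1}i_r}\delta_{j_rj_1},$$ $$h(u^*_{i_1j_1}u_{i_2j_2}u^*_{i_3j_3}u_{i_4j_4}\cdots u^*_{i_{r-1}j_{r-1}}u_{i_rj_r})=\tfrac1n\,\delta_{j_1j_2}\delta_{i_2i_3}\delta_{j_3j_4}\cdots\delta_{j_{r-1}j_r}\delta_{i_ri_1}.$$
   Context: $U_n^{nc}$ is the universal unital $*$-algebra generated by $u_{ij}$ ($1\le i,j\le n$) with $\sum_ku_{ki}^*u_{kj}=\delta_{ij}=\sum_ku_{ik}u_{jk}^*$. Let $H=\ell^2(\mathbb Z)\otimes\bigotimes_{k\in\mathbb Z}M_n(\mathbb C)$, where $M_n(\mathbb C)$ is a Hilbert space with inner product $\langle A,B\rangle=\mathrm{Tr}(A^*B)/n$ and the infinite tensor product is taken with respect to the reference vector $I_n$ (only finitely many factors differ from $I_n$); $(\delta_k)$ is the standard basis of $\ell^2(\mathbb Z)$ and $E_{ij}$ the matrix units. Define bounded operators $U_{ij}$ on $H$ by $U_{ij}(\delta_k\otimes(\cdots\otimes M_{k-1}\otimes M_k\otimes M_{k+1}\otimes\cdots))=\delta_{k+1}\otimes(\cdots\otimes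 M_{k-1}\otimes E_{ji}M_k\otimes M_{k+1}\otimes\cdots)$ (the factor at position $k$ is multiplied), so that $U_{ij}^*(\delta_k\otimes(\cdots\otimes M_{k-1}\otimes\cdots))=\delta_{k-1}\otimes(\cdots\otimes E_{ij}M_{k-1}\otimes M_k\otimes\cdots)$. These satisfy the defining relations of $U_n^{nc}$, so there is a unital $*$-homomorphism $j:U_n^{nc}\to B(H)$, $j(u_{ij})=U_{ij}$. With $\Omega=\delta_0\otimes\bigotimes_kI_n$, define $h(a)=\langle\Omega,j(a)\Omega\rangle$. *)

theory Defs
  imports Complex_Main "Jordan_Normal_Form.Matrix"
begin

text \<open>Generators of U_n^nc and their adjoints: a letter (s, i, j) stands for
  u_ij if s = False and for u_ij^* if s = True (indices 1..n).
  A monomial is a list of letters, read left to right as a product.\<close>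
type_synonym letter = "bool \<times> nat \<times> nat"

definition matunit :: "nat \<Rightarrow> nat \<Rightarrow> nat \<Rightarrow> complex mat" where
  "matunit n i j = mat n n (\<lambda>(a, b). if a = i - 1 \<and> b = j - 1 then 1 else 0)"

definition mat_inner :: "nat \<Rightarrow> complex mat \<Rightarrow> complex mat \<Rightarrow> complex" where
  "mat_inner n A B = (\<Sum>a<n. \<Sum>b<n. cnj (A $$ (a, b)) * B $$ (a, b)) / of_nat n"

text \<open>Elementary tensors delta_k (x) (x)_l M_l of H, with M_l = I_n for all but
  finitely many l.\<close>
type_synonym etensor = "int \<times> (int \<Rightarrow> complex mat)"

definition Omega :: "nat \<Rightarrow> etensor" where
  "Omega n = (0, \<lambda>_. 1\<^sub>m n)"

text \<open>Inner product of elementary tensors (only finitely many factors differ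
  from I_n, and <I_n, I_n> = 1).\<close>
definition etensor_inner :: "nat \<Rightarrow> etensor \<Rightarrow> etensor \<Rightarrow> complex" where
  "etensor_inner n x y =
     (if fst x = fst y
      then (\<Prod>l\<in>{l. snd x l \<noteq> 1\<^sub>m n \<or> snd y l \<noteq> 1\<^sub>m n}. mat_inner n (snd x l) (snd y l))
      else 0)"

fun act :: "nat \<Rightarrow> letter \<Rightarrow> etensor \<Rightarrow> etensor" where
  "act n (False, i, j) (k, M) = (k + 1, M(k := matunit n j i * M k))"
| "act n (True, i, j) (k, M) = (k - 1, M(k - 1 := matunit n i j * M (k - 1)))"

text \<open>j(w) Omega for a monomial w = x_1 x_2 ... x_r (x_r acts first).\<close>
definition apply_word :: "nat \<Rightarrow> letter list \<Rightarrow> etensor \<Rightarrow> etensor" where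
  "apply_word n w v = foldr (act n) w v"

definition hstate :: "nat \<Rightarrow> letter list \<Rightarrow> complex" where
  "hstate n w = etensor_inner n (Omega n) (apply_word n w (Omega n))"

definition kd :: "nat \<Rightarrow> nat \<Rightarrow> complex" where
  "kd a b = (if a = b then 1 else 0)"

end

theory Submission
  imports Defs
begin

lemma matunit_carrier[simp]: "matunit n a b \<in> carrier_mat n n"
  by (simp add: matunit_def)

lemma matunit_mult:
  assumes "1 \<le> b" "b \<le> n" "1 \<le> c" "c \<le> n"
  shows "matunit n a b * matunit n c d = kd b c \<cdot>\<^sub>m matunit n a d"
proof (rule eq_matI)
  fix x y assume xy: "x < dim_row (kd b c \<cdot>\<^sub>m matunit n a d)" "y < dim_col (kd b c \<cdot>\<^sub>m matunit n a d)"
  hence x: "x < n" and y: "y < n" by (auto simp: matunit_def)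
  have "(matunit n a b * matunit n c d) $$ (x, y)
      = (\<Sum>k<n. (if x = a - 1 \<and> k = b - 1 then 1 else 0) * (if k = c - 1 \<and> y = d - 1 then 1 else 0))"
    using x y by (simp add: matunit_def index_mult_mat scalar_prod_def atLeast0LessThan)
  also have "\<dots> = (\<Sum>k<n. if k = b - 1 then (if x = a - 1 \<and> b = c \<and> y = d - 1 then 1 else 0) else 0)"
    using assms by (intro sum.cong) auto
  also have "\<dots> = (if x = a - 1 \<and> b = c \<and> y = d - 1 then 1 else 0)"
    using assms by simp
  also have "\<dots> = (kd b c \<cdot>\<^sub>m matunit n a d) $$ (x, y)"
    using x y by (simp add: matunit_def kd_def)
  finally show "(matunit n a b * matunit n c d) $$ (x, y) = (kd b c \<cdot>\<^sub>m matunit n a d) $$ (x, y)" .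
qed (auto simp: matunit_def)

fun Q :: "nat \<Rightarrow> (nat \<Rightarrow> nat) \<Rightarrow> (nat \<Rightarrow> nat) \<Rightarrow> nat \<Rightarrow> nat \<Rightarrow> complex mat" where
  "Q n i j a 0 = 1\<^sub>m n"
| "Q n i j a (Suc m) = matunit n (j a) (i a) * matunit n (i (Suc a)) (j (Suc a)) * Q n i j (a + 2) m"

lemma Q_carrier[simp]: "Q n i j a m \<in> carrier_mat n n"
  by (induction m arbitrary: a) (auto intro!: mult_carrier_mat simp: matunit_def)

lemma word1:
  assumes "odd a" "\<forall>l. M l \<in> carrier_mat n n"
  shows "apply_word n (map (\<lambda>l. (even l, i l, j l)) [a..<a+2*m]) (k, M)
       = (k, M(k - 1 := Q n i j a m * M (k - 1)))"
  using assms
proof (induction m arbitrary: a)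
  case 0
  then show ?case by (auto simp add: apply_word_def fun_eq_iff intro!: left_mult_one_mat[symmetric])
next
  case (Suc m)
  have ls: "[a..<a+2*Suc m] = a # Suc a # [a+2..<a+2+2*m]"
    by (simp add: upt_rec)
  have IH: "apply_word n (map (\<lambda>l. (even l, i l, j l)) [a+2..<a+2+2*m]) (k, M)
       = (k, M(k - 1 := Q n i j (a+2) m * M (k - 1)))"
    using Suc.IH[of "a+2"] Suc.prems by (simp del: upt_Suc add: fun_upd_def)
  have M: "M (k-1) \<in> carrier_mat n n" using Suc by auto
  have "apply_word n (map (\<lambda>l. (even l, i l, j l)) [a..<a+2*Suc m]) (k, M)
     = act n (even a, i a, j a) (act n (even (Suc a), i (Suc a), j (Suc a))
         (apply_word n (map (\<lambda>l. (even l, i l, j l)) [a+2..<a+2+2*m]) (k, M)))"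
    unfolding ls apply_word_def by simp
  also have "\<dots> = (k, M(k - 1 := Q n i j a (Suc m) * M (k - 1)))"
    unfolding IH using Suc.prems M
    by (simp add: assoc_mult_mat[of _ n n _ n _ n] mult_carrier_mat[of _ n n _ n])
  finally show ?case .
qed

lemma word2:
  assumes "odd a" "\<forall>l. M l \<in> carrier_mat n n"
  shows "apply_word n (map (\<lambda>l. (odd l, i l, j l)) [a..<a+2*m]) (k, M)
       = (k, M(k := Q n j i a m * M k))"
  using assms
proof (induction m arbitrary: a)
  case 0
  then show ?case by (auto simp add: apply_word_def fun_eq_iff intro!: left_mult_one_mat[symmetric])
next
  case (Suc m)
  have ls: "[a..<a+2*Suc m] = a # Suc a # [a+2..<a+2+2*m]"
    by (simp add: upt_rec)
  have IH: "apply_word n (map (\<lambda>l. (odd l, i l, j l)) [a+2..<a+2+2*m]) (k, M)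
       = (k, M(k := Q n j i (a+2) m * M k))"
    using Suc.IH[of "a+2"] Suc.prems by (simp del: upt_Suc add: fun_upd_def)
  have M: "M k \<in> carrier_mat n n" using Suc by auto
  have "apply_word n (map (\<lambda>l. (odd l, i l, j l)) [a..<a+2*Suc m]) (k, M)
     = act n (odd a, i a, j a) (act n (odd (Suc a), i (Suc a), j (Suc a))
         (apply_word n (map (\<lambda>l. (odd l, i l, j l)) [a+2..<a+2+2*m]) (k, M)))"
    unfolding ls apply_word_def by simp
  also have "\<dots> = (k, M(k := Q n j i a (Suc m) * M (k)))"
    unfolding IH using Suc.prems M
    by (simp add: assoc_mult_mat[of _ n n _ n _ n] mult_carrier_mat[of _ n n _ n])
  finally show ?case .
qed


lemma smult_smult_mat': "x \<cdot>\<^sub>m (y \<cdot>\<^sub>m A) = (x * y) \<cdot>\<^sub>m (A :: complex mat)"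
  by (rule eq_matI) auto

lemma smult_mult_smult:
  assumes "A \<in> carrier_mat n n" "B \<in> carrier_mat n n"
  shows "(x \<cdot>\<^sub>m A) * (y \<cdot>\<^sub>m B) = (x * y) \<cdot>\<^sub>m (A * (B :: complex mat))"
  using assms by (simp add: mult_smult_assoc_mat[of _ n n _ n] mult_smult_distrib[of _ n n _ n] smult_smult_mat' mult.commute)

lemma Q_closed:
  assumes "odd a" "1 \<le> m"
    and "\<And>l. l \<in> {a..<a+2*m} \<Longrightarrow> 1 \<le> i l \<and> i l \<le> n \<and> 1 \<le> j l \<and> j l \<le> n"
  shows "Q n i j a m = (\<Prod>l\<in>{a..<a+2*m-1}. if odd l then kd (i l) (i (Suc l)) else kd (j l) (j (Suc l)))
            \<cdot>\<^sub>m matunit n (j a) (j (a+2*m-1))"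
  using assms
proof (induction m arbitrary: a)
  case 0
  then show ?case by simp
next
  case (Suc m)
  have ia: "1 \<le> i a" "i a \<le> n" "1 \<le> i (Suc a)" "i (Suc a) \<le> n"
       "1 \<le> j (Suc a)" "j (Suc a) \<le> n"
    using Suc.prems(3)[of a] Suc.prems(3)[of "Suc a"] Suc.prems(2)
    by auto
  have E12: "matunit n (j a) (i a) * matunit n (i (Suc a)) (j (Suc a))
        = kd (i a) (i (Suc a)) \<cdot>\<^sub>m matunit n (j a) (j (Suc a))"
    using ia by (simp add: matunit_mult)
  show ?case
  proof (cases "m = 0")
    case True
    then show ?thesis using E12 \<open>odd a\<close>
      by (simp add: right_mult_one_mat[of _ n n])
  next
    case False
    have ia2: "1 \<le> j (Suc (Suc a))" "j (Suc (Suc a)) \<le> n" using Suc.prems(3)[of "Suc (Suc a)"] False by auto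
    have IH: "Q n i j (a+2) m = (\<Prod>l\<in>{a+2..<a+2+2*m-1}. if odd l then kd (i l) (i (Suc l)) else kd (j l) (j (Suc l)))
            \<cdot>\<^sub>m matunit n (j (a+2)) (j (a+2+2*m-1))"
      using Suc.IH[of "a+2"] Suc.prems False by auto
    define f where "f = (\<lambda>l. if odd l then kd (i l) (i (Suc l)) else kd (j l) (j (Suc l)))"
    have pr: "(\<Prod>l\<in>{a..<a+2*Suc m-1}. f l) = f a * (f (Suc a) * (\<Prod>l\<in>{a+2..<a+2+2*m-1}. f l))"
    proof -
      have "{a..<a+2*Suc m-1} = insert a (insert (Suc a) {a+2..<a+2+2*m-1})" using False by auto
      then show ?thesis by simp
    qed
    have fa: "f a = kd (i a) (i (Suc a))" "f (Suc a) = kd (j (Suc a)) (j (Suc (Suc a)))"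
      using \<open>odd a\<close> by (auto simp: f_def)
    have "Q n i j a (Suc m) = (kd (i a) (i (Suc a)) \<cdot>\<^sub>m matunit n (j a) (j (Suc a))) * Q n i j (a + 2) m"
      by (simp add: E12)
    also have "\<dots> = (kd (i a) (i (Suc a)) * (\<Prod>l\<in>{a+2..<a+2+2*m-1}. f l))
        \<cdot>\<^sub>m (matunit n (j a) (j (Suc a)) * matunit n (j (a+2)) (j (a+2+2*m-1)))"
      unfolding IH f_def by (rule smult_mult_smult[of _ n]) auto
    also have "\<dots> = (\<Prod>l\<in>{a..<a+2*Suc m-1}. f l) \<cdot>\<^sub>m matunit n (j a) (j (a+2*Suc m-1))"
      unfolding pr fa using ia ia2 False
      by (simp add: matunit_mult smult_smult_mat' ac_simps)
    finally show ?thesis unfolding f_def .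
  qed
qed

lemma mat_inner_one_one: "n \<ge> 1 \<Longrightarrow> mat_inner n (1\<^sub>m n) (1\<^sub>m n) = 1"
proof -
  assume n: "n \<ge> 1"
  have "(\<Sum>a<n. \<Sum>b<n. cnj ((1\<^sub>m n :: complex mat) $$ (a, b)) * (1\<^sub>m n :: complex mat) $$ (a, b)) = (\<Sum>a<n. 1)"
  proof (rule sum.cong[OF refl])
    fix a assume a: "a \<in> {..<n}"
    have "(\<Sum>b<n. cnj ((1\<^sub>m n :: complex mat) $$ (a, b)) * (1\<^sub>m n :: complex mat) $$ (a, b))
        = (\<Sum>b<n. if b = a then 1 else 0)"
      using a by (intro sum.cong) auto
    also have "\<dots> = 1" using a by simp
    finally show "(\<Sum>b<n. cnj ((1\<^sub>m n :: complex mat) $$ (a, b)) * (1\<^sub>m n :: complex mat) $$ (a, b)) = 1" .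
  qed
  then show ?thesis using n by (simp add: mat_inner_def)
qed

lemma mat_inner_unit:
  assumes "1 \<le> x" "x \<le> n" "1 \<le> y" "y \<le> n"
  shows "mat_inner n (1\<^sub>m n) (c \<cdot>\<^sub>m matunit n x y) = c * kd x y / of_nat n"
proof -
  have "(\<Sum>a<n. \<Sum>b<n. cnj ((1\<^sub>m n :: complex mat) $$ (a, b)) * (c \<cdot>\<^sub>m matunit n x y) $$ (a, b))
      = (\<Sum>a<n. if a = x - 1 then c * kd x y else 0)"
  proof (rule sum.cong[OF refl])
    fix a assume a: "a \<in> {..<n}"
    have "(\<Sum>b<n. cnj ((1\<^sub>m n :: complex mat) $$ (a, b)) * (c \<cdot>\<^sub>m matunit n x y) $$ (a, b))
       = (\<Sum>b<n. if b = a then (if a = x - 1 \<and> a = y - 1 then c else 0) else 0)"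
      using a by (intro sum.cong) (auto simp: matunit_def)
    also have "\<dots> = (if a = x - 1 then c * kd x y else 0)"
      using a assms by (auto simp: kd_def)
    finally show "(\<Sum>b<n. cnj ((1\<^sub>m n :: complex mat) $$ (a, b)) * (c \<cdot>\<^sub>m matunit n x y) $$ (a, b))
       = (if a = x - 1 then c * kd x y else 0)" .
  qed
  also have "\<dots> = c * kd x y" using assms by simp
  finally show ?thesis by (simp add: mat_inner_def)
qed

lemma inner_final:
  assumes "1 \<le> n" "1 \<le> x" "x \<le> n" "1 \<le> y" "y \<le> n"
  shows "etensor_inner n (0, \<lambda>_. 1\<^sub>m n) (0, (\<lambda>_. 1\<^sub>m n)(p := c \<cdot>\<^sub>m matunit n x y)) = c * kd x y / of_nat n"
proof -
  define X where "X = c \<cdot>\<^sub>m matunit n x y"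
  have "(\<Prod>l\<in>{l. 1\<^sub>m n \<noteq> (1\<^sub>m n :: complex mat) \<or> ((\<lambda>_. 1\<^sub>m n)(p := X)) l \<noteq> 1\<^sub>m n}.
          mat_inner n (1\<^sub>m n) (((\<lambda>_. 1\<^sub>m n)(p := X)) l)) = mat_inner n (1\<^sub>m n) X"
  proof (cases "X = 1\<^sub>m n")
    case True
    then show ?thesis using assms by (simp add: mat_inner_one_one)
  next
    case False
    then have "{l. 1\<^sub>m n \<noteq> (1\<^sub>m n :: complex mat) \<or> ((\<lambda>_. 1\<^sub>m n)(p := X)) l \<noteq> 1\<^sub>m n} = {p}" by auto
    then show ?thesis by simp
  qed
  then show ?thesis using mat_inner_unit[OF assms(2-5)]
    by (simp add: etensor_inner_def X_def)
qed

theorem mainTheorem8: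
  fixes n r :: nat and i j :: "nat \<Rightarrow> nat"
  assumes "even r" and "r \<ge> 2"
    and "\<And>l. l \<in> {1..r} \<Longrightarrow> 1 \<le> i l \<and> i l \<le> n \<and> 1 \<le> j l \<and> j l \<le> n"
  shows "hstate n (map (\<lambda>l. (even l, i l, j l)) [1..<r+1])
           = (1 / of_nat n) * (\<Prod>l\<in>{1..<r}. if odd l then kd (i l) (i (Suc l)) else kd (j l) (j (Suc l)))
               * kd (j r) (j 1)
       \<and> hstate n (map (\<lambda>l. (odd l, i l, j l)) [1..<r+1])
           = (1 / of_nat n) * (\<Prod>l\<in>{1..<r}. if odd l then kd (j l) (j (Suc l)) else kd (i l) (i (Suc l)))
               * kd (i r) (i 1)"
proof -
  obtain m where r: "r = 2 * m" using assms(1) by blast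
  have m: "1 \<le> m" using assms(2) r by simp
  have n: "1 \<le> n" using assms(3)[of 1] assms(2) by auto
  have ups: "[1..<r+1] = [1..<1+2*m]" using r by simp
  have rng: "\<And>l. l \<in> {1..<1+2*m} \<Longrightarrow> 1 \<le> i l \<and> i l \<le> n \<and> 1 \<le> j l \<and> j l \<le> n"
    using assms(3) r by auto
  have rng2: "\<And>l. l \<in> {1..<1+2*m} \<Longrightarrow> 1 \<le> j l \<and> j l \<le> n \<and> 1 \<le> i l \<and> i l \<le> n"
    using rng by blast
  have e: "1 + 2 * m - 1 = r" using r by simp
  have b1: "1 \<le> i 1 \<and> i 1 \<le> n \<and> 1 \<le> j 1 \<and> j 1 \<le> n" "1 \<le> i r \<and> i r \<le> n \<and> 1 \<le> j r \<and> j r \<le> n"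
    using assms(3)[of 1] assms(3)[of r] assms(2) by auto
  have kds: "\<And>x y. kd x y = kd y x" by (simp add: kd_def)
  have C: "\<forall>l. (\<lambda>_. 1\<^sub>m n :: complex mat) l \<in> carrier_mat n n" by simp
  have "hstate n (map (\<lambda>l. (even l, i l, j l)) [1..<r+1])
      = etensor_inner n (0, \<lambda>_. 1\<^sub>m n) (0, (\<lambda>_. 1\<^sub>m n)(0 - 1 := Q n i j 1 m * 1\<^sub>m n))"
    unfolding hstate_def ups Omega_def using word1[OF _ C, of 1 i j m 0] by simp
  also have "Q n i j 1 m * 1\<^sub>m n = Q n i j 1 m" by (simp add: right_mult_one_mat[of _ n n])
  also note Q_closed[OF _ m rng]
  also have "etensor_inner n (0, \<lambda>_. 1\<^sub>m n) (0, (\<lambda>_. 1\<^sub>m n)(0 - 1 := (\<Prod>l\<in>{1..<1+2*m-1}. if odd l then kd (i l) (i (Suc l)) else kd (j l) (j (Suc l))) \<cdot>\<^sub>m matunit n (j 1) (j (1+2*m-1))))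
       = (\<Prod>l\<in>{1..<1+2*m-1}. if odd l then kd (i l) (i (Suc l)) else kd (j l) (j (Suc l))) * kd (j 1) (j (1+2*m-1)) / of_nat n"
    by (rule inner_final) (use n b1 e in auto)
  finally have 1: "hstate n (map (\<lambda>l. (even l, i l, j l)) [1..<r+1])
           = (1 / of_nat n) * (\<Prod>l\<in>{1..<r}. if odd l then kd (i l) (i (Suc l)) else kd (j l) (j (Suc l)))
               * kd (j r) (j 1)"
    unfolding e by (simp add: kds[of "j r"])
  have "hstate n (map (\<lambda>l. (odd l, i l, j l)) [1..<r+1])
      = etensor_inner n (0, \<lambda>_. 1\<^sub>m n) (0, (\<lambda>_. 1\<^sub>m n)(0 := Q n j i 1 m * 1\<^sub>m n))"
    unfolding hstate_def ups Omega_def using word2[OF _ C, of 1 i j m 0] by simp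
  also have "Q n j i 1 m * 1\<^sub>m n = Q n j i 1 m" by (simp add: right_mult_one_mat[of _ n n])
  also note Q_closed[OF _ m rng2]
  also have "etensor_inner n (0, \<lambda>_. 1\<^sub>m n) (0, (\<lambda>_. 1\<^sub>m n)(0 := (\<Prod>l\<in>{1..<1+2*m-1}. if odd l then kd (j l) (j (Suc l)) else kd (i l) (i (Suc l))) \<cdot>\<^sub>m matunit n (i 1) (i (1+2*m-1))))
       = (\<Prod>l\<in>{1..<1+2*m-1}. if odd l then kd (j l) (j (Suc l)) else kd (i l) (i (Suc l))) * kd (i 1) (i (1+2*m-1)) / of_nat n"
    by (rule inner_final) (use n b1 e in auto)
  finally have 2: "hstate n (map (\<lambda>l. (odd l, i l, j l)) [1..<r+1])
           = (1 / of_nat n) * (\<Prod>l\<in>{1..<r}. if odd l then kd (j l) (j (Suc l)) else kd (i l) (i (Suc l)))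
               * kd (i r) (i 1)"
    unfolding e by (simp add: kds[of "i r"])
  show ?thesis using 1 2 by blast
qed

end
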